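(* Let $q$ be a positive integer, let $a$ be an integer invertible modulo $q$, and let $\mathbf{r}\in\mathbb{N}_0^{q-1}$. Then $|\mathscr{W}^{(q)}_{\mathbf{r}}|=|\mathscr{W}^{(q)}_{{}^a\mathbf{r}}|$.
   Context: A composition is a finite sequence $\delta=(\delta_1,\ldots,\delta_s)$ of positive integers, $\ell(\delta)=s$; partial sums $\delta^+_j=\sum_{i=1}^j\delta_i$. A composition $\delta$ is $q'$-cumulative if it is nonempty and $q\nmid\delta^+_j$ for all $1\leq j\leq\ell(\delta)$. For $\mathbf{r}=(r_1,\ldots,r_{q-1})\in\mathbb{N}_0^{q-1}$, let $\mu$ be the partition with exactly $r_i$ parts equal to $i$ for each $1\le i\le q-1$ and no other parts, and let $\mathscr{W}^{(q)}_{\mathbf{r}}$ be the set of $q'$-cumulative compositions that are rearrangements of $\mu$. For $a$ invertible modulo $q$, ${}^a\mathbf{r}=(r'_1,\ldots,r'_{q-1})$ where $r'_j=r_i$ whenever $j\equiv ai\pmod q$ ($1\le i,j\le q-1$). *)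

theory Defs
  imports Main "HOL-Library.Multiset" "HOL-Number_Theory.Cong"
begin

definition q_cumulative :: "nat \<Rightarrow> nat list \<Rightarrow> bool" where
  "q_cumulative q \<delta> \<longleftrightarrow> \<delta> \<noteq> [] \<and> (\<forall>j\<in>{1..length \<delta>}. \<not> q dvd sum_list (take j \<delta>))"

(* The partition mu: exactly r i parts equal to i, for 1 <= i <= q-1. The vector
   r in N_0^{q-1} is represented as a function nat => nat of which only the values
   at 1..q-1 are used. *)
definition mu_mset :: "nat \<Rightarrow> (nat \<Rightarrow> nat) \<Rightarrow> nat multiset" where
  "mu_mset q r = (\<Sum>i\<in>{1..q-1}. replicate_mset (r i) i)"

definition W :: "nat \<Rightarrow> (nat \<Rightarrow> nat) \<Rightarrow> nat list set" where
  "W q r = {\<delta>. (\<forall>x\<in>set \<delta>. 0 < x) \<and> q_cumulative q \<delta> \<and> mset \<delta> = mu_mset q r}"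

definition twist :: "nat \<Rightarrow> int \<Rightarrow> (nat \<Rightarrow> nat) \<Rightarrow> (nat \<Rightarrow> nat)" where
  "twist q a r = (\<lambda>j. r (THE i. i \<in> {1..q-1} \<and> [int j = a * int i] (mod int q)))"

end

theory Submission
  imports Defs
begin

definition fm :: "nat \<Rightarrow> int \<Rightarrow> nat \<Rightarrow> nat" where
  "fm q a x = nat ((a * int x) mod int q)"

lemma fm_int: "0 < q \<Longrightarrow> int (fm q a x) = (a * int x) mod int q"
  unfolding fm_def by simp

lemma fm_range:
  assumes q: "0 < q" and c: "coprime a (int q)" and x: "x \<in> {1..q-1}"
  shows "fm q a x \<in> {1..q-1}"
proof -
  let ?m = "(a * int x) mod int q"
  have m0: "0 \<le> ?m" "?m < int q" using q by auto
  have "?m \<noteq> 0"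
  proof
    assume "?m = 0"
    hence "int q dvd a * int x" by auto
    hence "int q dvd int x" using c by (simp add: coprime_commute coprime_dvd_mult_right_iff)
    hence "q dvd x" by simp
    with x show False by (auto dest: dvd_imp_le)
  qed
  with m0 show ?thesis unfolding fm_def by auto
qed

lemma fm_inj:
  assumes q: "0 < q" and c: "coprime a (int q)"
  shows "inj_on (fm q a) {1..q-1}"
proof
  fix x y assume x: "x \<in> {1..q-1}" and y: "y \<in> {1..q-1}" and e: "fm q a x = fm q a y"
  have "int (fm q a x) = int (fm q a y)" using e by simp
  hence "[a * int x = a * int y] (mod int q)" using q by (simp add: fm_int cong_def)
  hence "[int x = int y] (mod int q)" using c by (simp add: cong_mult_lcancel)
  hence "[x = y] (mod q)" by (simp add: cong_int_iff)
  thus "x = y" using x y by (auto simp: cong_def)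
qed

lemma fm_surj:
  assumes q: "0 < q" and c: "coprime a (int q)"
  shows "fm q a ` {1..q-1} = {1..q-1}"
  by (rule endo_inj_surj) (use fm_range[OF q c] fm_inj[OF q c] in auto)

lemma twist_fm:
  assumes q: "0 < q" and c: "coprime a (int q)" and x: "x \<in> {1..q-1}"
  shows "twist q a r (fm q a x) = r x"
proof -
  have "(THE i. i \<in> {1..q-1} \<and> [int (fm q a x) = a * int i] (mod int q)) = x"
  proof (rule the_equality)
    show "x \<in> {1..q-1} \<and> [int (fm q a x) = a * int x] (mod int q)"
      using x q by (simp add: fm_int cong_def)
  next
    fix i assume i: "i \<in> {1..q-1} \<and> [int (fm q a x) = a * int i] (mod int q)"
    hence "[a * int i = a * int x] (mod int q)" using q
      by (simp add: fm_int cong_def)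
    hence "[int i = int x] (mod int q)" using c by (simp add: cong_mult_lcancel)
    hence "[i = x] (mod q)" by (simp add: cong_int_iff)
    thus "i = x" using x i by (auto simp: cong_def)
  qed
  thus ?thesis unfolding twist_def by simp
qed

lemma sum_fm: "0 < q \<Longrightarrow> [int (sum_list (map (fm q a) xs)) = a * int (sum_list xs)] (mod int q)"
proof (induction xs)
  case Nil then show ?case by simp
next
  case (Cons x xs)
  have c1: "[int (fm q a x) = a * int x] (mod int q)"
    using Cons.prems by (simp add: fm_int cong_def)
  have "[int (fm q a x) + int (sum_list (map (fm q a) xs)) = a * int x + a * int (sum_list xs)] (mod int q)"
    by (rule cong_add[OF c1 Cons.IH[OF Cons.prems]])
  thus ?case by (simp add: distrib_left)
qed

lemma dvd_sum_fm:
  assumes q: "0 < q" and c: "coprime a (int q)"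
  shows "q dvd sum_list (map (fm q a) xs) \<longleftrightarrow> q dvd sum_list xs"
proof -
  have "q dvd sum_list (map (fm q a) xs) \<longleftrightarrow> int q dvd int (sum_list (map (fm q a) xs))"
    by (rule int_dvd_int_iff[symmetric])
  also have "\<dots> \<longleftrightarrow> int q dvd a * int (sum_list xs)"
    by (rule cong_dvd_iff[OF sum_fm[OF q]])
  also have "\<dots> \<longleftrightarrow> int q dvd int (sum_list xs)"
    using c by (simp add: coprime_commute coprime_dvd_mult_right_iff)
  also have "\<dots> \<longleftrightarrow> q dvd sum_list xs" by (rule int_dvd_int_iff)
  finally show ?thesis .
qed

lemma mu_cong: assumes "\<And>i. i \<in> {1..q-1} \<Longrightarrow> r i = r' i" shows "W q r = W q r'"
proof -
  have "mu_mset q r = mu_mset q r'"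
    unfolding mu_mset_def by (rule sum.cong) (use assms in auto)
  thus ?thesis unfolding W_def by simp
qed

lemma finite_W: "finite (W q r)"
proof -
  have "W q r \<subseteq> {xs. set xs \<subseteq> set_mset (mu_mset q r) \<and> length xs = size (mu_mset q r)}"
    unfolding W_def by (auto dest: arg_cong[of _ _ set_mset] arg_cong[of _ _ size])
  moreover have "finite {xs. set xs \<subseteq> set_mset (mu_mset q r) \<and> length xs = size (mu_mset q r)}"
    by (rule finite_lists_length_eq) simp
  ultimately show ?thesis by (rule finite_subset)
qed

lemma image_mset_sum': "finite A \<Longrightarrow> image_mset f (\<Sum>x\<in>A. g x) = (\<Sum>x\<in>A. image_mset f (g x))"
  by (induction A rule: finite_induct) auto

lemma in_mu: "x \<in># mu_mset q r \<Longrightarrow> x \<in> {1..q-1}"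
  unfolding mu_mset_def by (subst (asm) set_mset_sum) (auto split: if_splits)

lemma set_W: assumes "d \<in> W q r" shows "set d \<subseteq> {1..q-1}"
proof
  fix x assume "x \<in> set d"
  hence "x \<in># mset d" by simp
  moreover have "mset d = mu_mset q r" using assms unfolding W_def by simp
  ultimately show "x \<in> {1..q-1}" using in_mu by metis
qed

lemma mset_fm:
  assumes q: "0 < q" and c: "coprime a (int q)"
  shows "image_mset (fm q a) (mu_mset q r) = mu_mset q (twist q a r)"
proof -
  have "image_mset (fm q a) (mu_mset q r) = (\<Sum>i\<in>{1..q-1}. replicate_mset (r i) (fm q a i))"
    unfolding mu_mset_def by (simp add: image_mset_sum')
  also have "\<dots> = (\<Sum>i\<in>{1..q-1}. replicate_mset (twist q a r (fm q a i)) (fm q a i))"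
    using twist_fm[OF q c] by (intro sum.cong) auto
  also have "\<dots> = (\<Sum>j\<in>fm q a ` {1..q-1}. replicate_mset (twist q a r j) j)"
    by (rule sum.reindex[OF fm_inj[OF q c], symmetric, unfolded comp_def])
  also have "\<dots> = mu_mset q (twist q a r)"
    unfolding mu_mset_def fm_surj[OF q c] ..
  finally show ?thesis .
qed

lemma card_le:
  assumes q: "0 < q" and c: "coprime a (int q)"
  shows "card (W q r) \<le> card (W q (twist q a r))"
proof (rule card_inj_on_le[OF _ _ finite_W])
  show "map (fm q a) ` W q r \<subseteq> W q (twist q a r)"
  proof
    fix ys assume "ys \<in> map (fm q a) ` W q r"
    then obtain d where d: "d \<in> W q r" and ys: "ys = map (fm q a) d" by auto
    have ms: "mset d = mu_mset q r" and qc: "q_cumulative q d" using d unfolding W_def by auto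
    have sd: "set d \<subseteq> {1..q-1}"
    proof
      fix x assume "x \<in> set d"
      hence "x \<in># mu_mset q r" using ms by (metis set_mset_mset)
      thus "x \<in> {1..q-1}" by (rule in_mu)
    qed
    have "\<forall>x\<in>set ys. 0 < x"
    proof
      fix y assume "y \<in> set ys"
      then obtain x where "x \<in> set d" "y = fm q a x" using ys by auto
      thus "0 < y" using sd fm_range[OF q c, of x] by auto
    qed
    moreover have "mset ys = mu_mset q (twist q a r)"
      using ys ms mset_fm[OF q c] by simp
    moreover have "q_cumulative q ys"
      using qc ys dvd_sum_fm[OF q c] unfolding q_cumulative_def by (simp add: take_map)
    ultimately show "ys \<in> W q (twist q a r)" unfolding W_def by simp
  qed
  show "inj_on (map (fm q a)) (W q r)"
  proof
    fix d e assume d: "d \<in> W q r" and e: "e \<in> W q r" and de: "map (fm q a) d = map (fm q a) e"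
    have "set d \<subseteq> {1..q-1}" "set e \<subseteq> {1..q-1}"
      using set_W d e by blast+
    hence "inj_on (fm q a) (set d \<union> set e)"
      using inj_on_subset[OF fm_inj[OF q c]] by (meson Un_least)
    thus "d = e" using de inj_on_map_eq_map[of "fm q a" d e] by simp
  qed
qed

theorem lemma2:
  fixes q :: nat and a :: int and r :: "nat \<Rightarrow> nat"
  assumes "0 < q" and "coprime a (int q)"
  shows "card (W q r) = card (W q (twist q a r))"
proof -
  obtain b where b: "[a * b = 1] (mod int q)" using cong_solve_coprime_int[OF assms(2)] by auto
  have cb: "coprime b (int q)"
  proof -
    have "coprime (a * b) (int q)" by (rule cong_imp_coprime[OF cong_sym[OF b]]) simp
    thus ?thesis by simp
  qed
  have "W q (twist q b (twist q a r)) = W q r"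
  proof (rule mu_cong)
    fix j assume j: "j \<in> {1..q-1}"
    let ?i = "fm q a j"
    have i: "?i \<in> {1..q-1}" using fm_range[OF assms(1,2) j] .
    have "int (fm q b ?i) = (b * ((a * int j) mod int q)) mod int q"
      using assms(1) by (simp add: fm_int)
    also have "\<dots> = ((a * b) * int j) mod int q" by (simp add: mod_mult_right_eq ac_simps)
    also have "\<dots> = (1 * int j) mod int q" using b unfolding cong_def by (metis mod_mult_left_eq)
    also have "\<dots> = int j" using j by auto
    finally have jj: "fm q b ?i = j" by simp
    have "twist q b (twist q a r) (fm q b ?i) = twist q a r ?i" by (rule twist_fm[OF assms(1) cb i])
    also have "\<dots> = r j" by (rule twist_fm[OF assms(1,2) j])
    finally show "twist q b (twist q a r) j = r j" using jj by simp
  qed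
  hence "card (W q (twist q a r)) \<le> card (W q r)"
    using card_le[OF assms(1) cb, of "twist q a r"] by simp
  with card_le[OF assms, of r] show ?thesis by simp
qed

end
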